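(* Let $(\Omega,\mathcal{F})$ be a measurable space, $\mathcal{P}$ a nonempty set of probability measures on it, $\hat{\mathbb{E}}[Z]=\sup_{P\in\mathcal{P}}E_P[Z]$, and let $X,Y$ be random variables with $\hat{\mathbb{E}}[X^2]+\hat{\mathbb{E}}[Y^2]<\infty$. Then (1) $\overline{V}(X+Y)\le\overline{V}(X)+\overline{V}(Y)+2\overline{C}(X,Y)$; (2) $\underline{V}(X+Y)\ge\underline{V}(X)+\underline{V}(Y)+2\underline{C}(X,Y)$; (3) $\underline{V}\left(\frac{X+Y}{2}\right)-\overline{V}\left(\frac{X-Y}{2}\right)\le\underline{C}(X,Y)\le\overline{C}(X,Y)\le\overline{V}\left(\frac{X+Y}{2}\right)-\underline{V}\left(\frac{X-Y}{2}\right)$; (4) $|\overline{C}(X,Y)|\le\sqrt{\overline{V}(X)\overline{V}(Y)}$.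
   Context: For a random variable $W$ with $\hat{\mathbb{E}}[W^2]<\infty$: $\overline{\mu}_W=\hat{\mathbb{E}}[W]$, $\underline{\mu}_W=-\hat{\mathbb{E}}[-W]$, $M_W=[\underline{\mu}_W,\overline{\mu}_W]$. Upper variance $\overline{V}(W)=\min_{\mu\in M_W}\hat{\mathbb{E}}[(W-\mu)^2]$, lower variance $\underline{V}(W)=\min_{\mu\in M_W}\left(-\hat{\mathbb{E}}[-(W-\mu)^2]\right)$. Upper covariance $\overline{C}(X,Y)=\max_{\mu_2\in M_Y}\min_{\mu_1\in M_X}\hat{\mathbb{E}}[(X-\mu_1)(Y-\mu_2)]$; lower covariance $\underline{C}(X,Y)=\min_{\mu_2\in M_Y}\max_{\mu_1\in M_X}\left(-\hat{\mathbb{E}}[-(X-\mu_1)(Y-\mu_2)]\right)$. *)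

theory Defs
  imports "HOL-Probability.Probability"
begin

definition upper_exp :: "'a measure set \<Rightarrow> ('a \<Rightarrow> real) \<Rightarrow> real" where
  "upper_exp Ps Z = (SUP P\<in>Ps. integral\<^sup>L P Z)"

definition upper_mean :: "'a measure set \<Rightarrow> ('a \<Rightarrow> real) \<Rightarrow> real" where
  "upper_mean Ps W = upper_exp Ps W"

definition lower_mean :: "'a measure set \<Rightarrow> ('a \<Rightarrow> real) \<Rightarrow> real" where
  "lower_mean Ps W = - upper_exp Ps (\<lambda>\<omega>. - W \<omega>)"

definition mean_interval :: "'a measure set \<Rightarrow> ('a \<Rightarrow> real) \<Rightarrow> real set" where
  "mean_interval Ps W = {lower_mean Ps W .. upper_mean Ps W}"

definition upper_var :: "'a measure set \<Rightarrow> ('a \<Rightarrow> real) \<Rightarrow> real" where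
  "upper_var Ps W = (INF \<mu>\<in>mean_interval Ps W. upper_exp Ps (\<lambda>\<omega>. (W \<omega> - \<mu>)\<^sup>2))"

definition lower_var :: "'a measure set \<Rightarrow> ('a \<Rightarrow> real) \<Rightarrow> real" where
  "lower_var Ps W = (INF \<mu>\<in>mean_interval Ps W. - upper_exp Ps (\<lambda>\<omega>. - (W \<omega> - \<mu>)\<^sup>2))"

definition upper_cov :: "'a measure set \<Rightarrow> ('a \<Rightarrow> real) \<Rightarrow> ('a \<Rightarrow> real) \<Rightarrow> real" where
  "upper_cov Ps X Y = (SUP \<mu>2\<in>mean_interval Ps Y. INF \<mu>1\<in>mean_interval Ps X.
      upper_exp Ps (\<lambda>\<omega>. (X \<omega> - \<mu>1) * (Y \<omega> - \<mu>2)))"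

definition lower_cov :: "'a measure set \<Rightarrow> ('a \<Rightarrow> real) \<Rightarrow> ('a \<Rightarrow> real) \<Rightarrow> real" where
  "lower_cov Ps X Y = (INF \<mu>2\<in>mean_interval Ps Y. SUP \<mu>1\<in>mean_interval Ps X.
      - upper_exp Ps (\<lambda>\<omega>. - ((X \<omega> - \<mu>1) * (Y \<omega> - \<mu>2))))"

end

theory Submission
  imports Defs
begin


lemma helly_interval:
  fixes m r :: "'i \<Rightarrow> real"
  assumes "lo \<le> hi" "\<And>P. P \<in> S \<Longrightarrow> lo \<le> m P \<and> m P \<le> hi" "\<And>P. P \<in> S \<Longrightarrow> r P \<ge> 0"
    "\<And>P Q. P \<in> S \<Longrightarrow> Q \<in> S \<Longrightarrow> m P - r P \<le> m Q + r Q"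
  shows "\<exists>\<mu>\<in>{lo..hi}. \<forall>P\<in>S. \<bar>m P - \<mu>\<bar> \<le> r P"
proof -
  define A where "A = insert lo ((\<lambda>P. m P - r P) ` S)"
  have ne: "A \<noteq> {}" unfolding A_def by simp
  have ub: "\<And>a. a \<in> A \<Longrightarrow> a \<le> hi" unfolding A_def using assms(1,2,3) by force
  hence bdd: "bdd_above A" by (meson bdd_above.I)
  define x where "x = Sup A"
  have "lo \<le> x" unfolding x_def by (rule cSup_upper[OF _ bdd]) (simp add: A_def)
  moreover have "x \<le> hi" unfolding x_def by (rule cSup_least[OF ne]) (use ub in auto)
  moreover have "\<forall>P\<in>S. \<bar>m P - x\<bar> \<le> r P"
  proof
    fix P assume P: "P \<in> S"
    have "m P - r P \<le> x" unfolding x_def by (rule cSup_upper[OF _ bdd]) (use P in \<open>simp add: A_def\<close>)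
    moreover have "x \<le> m P + r P" unfolding x_def
    proof (rule cSup_least[OF ne])
      fix a assume "a \<in> A"
      then show "a \<le> m P + r P" unfolding A_def using assms(2,3,4) P by force
    qed
    ultimately show "\<bar>m P - x\<bar> \<le> r P" by linarith
  qed
  ultimately show ?thesis by auto
qed

lemma helly_half:
  fixes a b R :: "'i \<Rightarrow> real"
  assumes "lo \<le> hi" "\<And>P. P \<in> S \<Longrightarrow> lo \<le> a P \<and> a P \<le> hi" "\<And>P. P \<in> S \<Longrightarrow> R P \<ge> 0"
    "\<And>P Q. P \<in> S \<Longrightarrow> Q \<in> S \<Longrightarrow> b P > 0 \<Longrightarrow> b Q < 0 \<Longrightarrow> a P - R P / b P \<le> a Q - R Q / b Q"
  shows "\<exists>\<mu>\<in>{lo..hi}. \<forall>P\<in>S. (a P - \<mu>) * b P \<le> R P"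
proof -
  define A where "A = insert lo ((\<lambda>P. a P - R P / b P) ` {P\<in>S. b P > 0})"
  have ne: "A \<noteq> {}" unfolding A_def by simp
  have ub: "\<And>z. z \<in> A \<Longrightarrow> z \<le> hi"
  proof -
    fix z assume "z \<in> A"
    then consider "z = lo" | P where "P \<in> S" "b P > 0" "z = a P - R P / b P" unfolding A_def by auto
    then show "z \<le> hi"
    proof cases
      case 1 then show ?thesis using assms(1) by simp
    next
      case 2
      have "R P / b P \<ge> 0" using 2 assms(3) by simp
      then show ?thesis using 2 assms(2)[of P] by linarith
    qed
  qed
  hence bdd: "bdd_above A" by (meson bdd_above.I)
  define x where "x = Sup A"
  have "lo \<le> x" unfolding x_def by (rule cSup_upper[OF _ bdd]) (simp add: A_def)
  moreover have "x \<le> hi" unfolding x_def by (rule cSup_least[OF ne]) (use ub in auto)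
  moreover have "\<forall>P\<in>S. (a P - x) * b P \<le> R P"
  proof
    fix P assume P: "P \<in> S"
    consider "b P > 0" | "b P = 0" | "b P < 0" by linarith
    then show "(a P - x) * b P \<le> R P"
    proof cases
      case 1
      have "a P - R P / b P \<le> x" unfolding x_def by (rule cSup_upper[OF _ bdd]) (use P 1 in \<open>simp add: A_def\<close>)
      then have "a P - x \<le> R P / b P" by linarith
      then show ?thesis using 1 by (simp add: pos_le_divide_eq)
    next
      case 2 then show ?thesis using assms(3) P by simp
    next
      case 3
      have "x \<le> a P - R P / b P" unfolding x_def
      proof (rule cSup_least[OF ne])
        fix z assume "z \<in> A"
        then consider "z = lo" | Q where "Q \<in> S" "b Q > 0" "z = a Q - R Q / b Q" unfolding A_def by auto
        then show "z \<le> a P - R P / b P"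
        proof cases
          case 1
          have "R P / b P \<le> 0" using 3 assms(3) P by (simp add: divide_nonneg_neg)
          then show ?thesis using 1 assms(2)[OF P] by linarith
        next
          case 2 then show ?thesis using assms(4)[of Q P] P 3 by simp
        qed
      qed
      then have "R P / b P \<le> a P - x" by linarith
      then show ?thesis using 3 by (simp add: neg_divide_le_eq mult.commute)
    qed
  qed
  ultimately show ?thesis by auto
qed

lemma quad_cs:
  fixes v w c :: real
  assumes "\<And>x y. 0 \<le> x^2 * v + 2*x*y*c + y^2 * w"
  shows "c^2 \<le> v * w"
proof (cases "v = 0")
  case True
  have "c = 0"
  proof (rule ccontr)
    assume "c \<noteq> 0"
    have "0 \<le> 2*(-(w+1)/(2*c))*1*c + 1^2*w" using assms[of "-(w+1)/(2*c)" 1] True by simp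
    also have "\<dots> = -1" using \<open>c \<noteq> 0\<close> by (simp add: field_simps)
    finally show False by simp
  qed
  then show ?thesis using True by simp
next
  case False
  have v0: "v \<ge> 0" using assms[of 1 0] by simp
  hence "v > 0" using False by simp
  have "0 \<le> c^2 * v + 2*c*(-v)*c + v^2 * w" using assms[of c "-v"] by simp
  hence "0 \<le> v * (v * w - c^2)" by (simp add: power2_eq_square algebra_simps)
  then show ?thesis using \<open>v > 0\<close> by (simp add: zero_le_mult_iff)
qed

lemma pair_interval:
  fixes a b d :: real
  assumes "a \<ge> 0" "b \<ge> 0" "\<And>t. 0 \<le> t \<Longrightarrow> t \<le> 1 \<Longrightarrow> t*(1-t)*d^2 \<le> t*a^2 + (1-t)*b^2"
  shows "\<bar>d\<bar> \<le> a + b"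
proof (rule ccontr)
  assume "\<not> ?thesis"
  define D where "D = \<bar>d\<bar>"
  have D: "D > a + b" using \<open>\<not> _\<close> D_def by simp
  hence Dp: "D > 0" using assms by linarith
  define t where "t = (D^2 - a^2 + b^2)/(2*D^2)"
  have "a < D" using D assms by linarith
  hence "a^2 < D^2" using assms(1) by (simp add: power_strict_mono)
  hence t0: "0 \<le> t" unfolding t_def using Dp by (simp add: divide_nonneg_pos add_nonneg_nonneg)
  have "b < D" using D assms by linarith
  hence "b^2 < D^2" using assms(2) by (simp add: power_strict_mono)
  hence t1: "t \<le> 1" unfolding t_def using Dp by (simp add: field_simps add_increasing2)
  have d2: "d^2 = D^2" unfolding D_def by simp
  have eq: "t*(1-t)*D^2 - (t*a^2 + (1-t)*b^2) = ((D-b)^2 - a^2)*((D+b)^2 - a^2)/(4*D^2)"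
  proof -
    have "D^2 \<noteq> 0" using Dp by simp
    show ?thesis unfolding t_def using Dp
      by (simp add: field_simps power2_eq_square)
  qed
  have "(D-b)^2 > a^2" using D assms power_strict_mono[of a "D-b" 2] by simp
  moreover have "(D+b)^2 > a^2" using D assms power_strict_mono[of a "D+b" 2] by simp
  ultimately have "((D-b)^2 - a^2)*((D+b)^2 - a^2)/(4*D^2) > 0" using Dp by simp
  moreover have "t*(1-t)*d^2 = t*(1-t)*D^2" using d2 by simp
  ultimately show False using eq assms(3)[OF t0 t1] by linarith
qed

lemma pair_half:
  fixes p q d RP RQ :: real
  assumes "p > 0" "q > 0" "\<And>t. 0 \<le> t \<Longrightarrow> t \<le> 1 \<Longrightarrow> t*(1-t)*d*(p+q) \<le> t*RP + (1-t)*RQ"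
  shows "d \<le> RP/p + RQ/q"
proof -
  define t where "t = q/(p+q)"
  have t0: "0 \<le> t" "t \<le> 1" unfolding t_def using assms by auto
  have "1 - t = p/(p+q)" unfolding t_def using assms by (simp add: field_simps)
  have pq: "p + q \<noteq> 0" using assms by simp
  have "q/(p+q)*(p/(p+q))*d*(p+q) \<le> q/(p+q)*RP + p/(p+q)*RQ" using assms(3)[OF t0] \<open>1 - t = _\<close> unfolding t_def by simp
  moreover have "q/(p+q)*(p/(p+q))*d*(p+q) = (q*p*d)/(p+q)" using pq
    by (simp add: divide_simps)
  moreover have "q/(p+q)*RP + p/(p+q)*RQ = (q*RP + p*RQ)/(p+q)" by (simp add: add_divide_distrib)
  ultimately have "(q*p*d)/(p+q) \<le> (q*RP + p*RQ)/(p+q)" by simp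
  hence "q*p*d \<le> q*RP + p*RQ" using assms by (simp add: divide_le_cancel)
  hence "d \<le> (q*RP + p*RQ)/(p*q)" using assms by (simp add: pos_le_divide_eq mult.commute mult.left_commute)
  also have "\<dots> = RP/p + RQ/q" using assms by (simp add: field_simps)
  finally show ?thesis .
qed

lemma pair_half2:
  fixes p q aP aQ RP RQ :: real
  assumes "p > 0" "q < 0" "\<And>t. 0 \<le> t \<Longrightarrow> t \<le> 1 \<Longrightarrow> t*(1-t)*(aP - aQ)*(p - q) \<le> t*RP + (1-t)*RQ"
  shows "aP - RP/p \<le> aQ - RQ/q"
proof -
  have "aP - aQ \<le> RP/p + RQ/(-q)" by (rule pair_half) (use assms in auto)
  moreover have "RQ/(-q) = -(RQ/q)" by simp
  ultimately show ?thesis by linarith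
qed



lemma abs_le_1_sq: "\<bar>x::real\<bar> \<le> 1 + x\<^sup>2"
proof (cases "\<bar>x\<bar> \<le> 1")
  case True then show ?thesis by (smt (verit) zero_le_power2)
next
  case False
  then have "\<bar>x\<bar> * 1 \<le> \<bar>x\<bar> * \<bar>x\<bar>" by (intro mult_left_mono) auto
  then show ?thesis by (simp add: power2_eq_square abs_mult_self_eq)
qed

locale pv =
  fixes M :: "'a measure" and Ps :: "'a measure set" and X Y :: "'a \<Rightarrow> real"
  assumes Ps_ne: "Ps \<noteq> {}"
    and Ps_prob: "\<And>P. P \<in> Ps \<Longrightarrow> prob_space P \<and> sets P = sets M"
    and X_meas: "X \<in> borel_measurable M"
    and Y_meas: "Y \<in> borel_measurable M"
    and X2_int: "\<And>P. P \<in> Ps \<Longrightarrow> integrable P (\<lambda>\<omega>. (X \<omega>)\<^sup>2)"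
    and Y2_int: "\<And>P. P \<in> Ps \<Longrightarrow> integrable P (\<lambda>\<omega>. (Y \<omega>)\<^sup>2)"
    and X2_bdd: "bdd_above ((\<lambda>P. integral\<^sup>L P (\<lambda>\<omega>. (X \<omega>)\<^sup>2)) ` Ps)"
    and Y2_bdd: "bdd_above ((\<lambda>P. integral\<^sup>L P (\<lambda>\<omega>. (Y \<omega>)\<^sup>2)) ` Ps)"
begin

definition "ex P = integral\<^sup>L P X"
definition "ey P = integral\<^sup>L P Y"
definition "exx P = integral\<^sup>L P (\<lambda>\<omega>. (X \<omega>)\<^sup>2)"
definition "eyy P = integral\<^sup>L P (\<lambda>\<omega>. (Y \<omega>)\<^sup>2)"
definition "exy P = integral\<^sup>L P (\<lambda>\<omega>. X \<omega> * Y \<omega>)"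

lemma integ:
  assumes P: "P \<in> Ps"
  shows "integrable P X" "integrable P Y" "integrable P (\<lambda>\<omega>. (X \<omega>)\<^sup>2)"
    "integrable P (\<lambda>\<omega>. (Y \<omega>)\<^sup>2)" "integrable P (\<lambda>\<omega>. X \<omega> * Y \<omega>)"
proof -
  interpret prob_space P using Ps_prob[OF P] by simp
  have s: "sets P = sets M" using Ps_prob[OF P] by simp
  have mc: "measurable P (borel::real measure) = measurable M borel" by (rule measurable_cong_sets[OF s refl])
  have Xm: "X \<in> borel_measurable P" using X_meas mc by simp
  have Ym: "Y \<in> borel_measurable P" using Y_meas mc by simp
  show "integrable P X" by (rule square_integrable_imp_integrable[OF Xm X2_int[OF P]])
  show "integrable P Y" by (rule square_integrable_imp_integrable[OF Ym Y2_int[OF P]])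
  show "integrable P (\<lambda>\<omega>. (X \<omega>)\<^sup>2)" by (rule X2_int[OF P])
  show "integrable P (\<lambda>\<omega>. (Y \<omega>)\<^sup>2)" by (rule Y2_int[OF P])
  show "integrable P (\<lambda>\<omega>. X \<omega> * Y \<omega>)"
  proof (rule Bochner_Integration.integrable_bound[where f="\<lambda>\<omega>. (X \<omega>)\<^sup>2 + (Y \<omega>)\<^sup>2"])
    show "integrable P (\<lambda>\<omega>. (X \<omega>)\<^sup>2 + (Y \<omega>)\<^sup>2)" using X2_int[OF P] Y2_int[OF P] by simp
    show "(\<lambda>\<omega>. X \<omega> * Y \<omega>) \<in> borel_measurable P" using Xm Ym by simp
    show "AE x in P. norm (X x * Y x) \<le> norm ((X x)\<^sup>2 + (Y x)\<^sup>2)"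
    proof (rule AE_I2)
      fix x
      have "2 * \<bar>X x\<bar> * \<bar>Y x\<bar> \<le> (X x)\<^sup>2 + (Y x)\<^sup>2"
        using sum_squares_bound[of "\<bar>X x\<bar>" "\<bar>Y x\<bar>"] by simp
      moreover have "\<bar>X x\<bar> * \<bar>Y x\<bar> \<le> 2 * \<bar>X x\<bar> * \<bar>Y x\<bar>" by simp
      ultimately have "\<bar>X x\<bar> * \<bar>Y x\<bar> \<le> (X x)\<^sup>2 + (Y x)\<^sup>2" by linarith
      then show "norm (X x * Y x) \<le> norm ((X x)\<^sup>2 + (Y x)\<^sup>2)" by (simp add: abs_mult)
    qed
  qed
qed

lemma int_poly:
  assumes P: "P \<in> Ps"
  shows "integral\<^sup>L P (\<lambda>\<omega>. c0 + c1 * X \<omega> + c2 * Y \<omega> + c3 * (X \<omega>)\<^sup>2 + c4 * (Y \<omega>)\<^sup>2 + c5 * (X \<omega> * Y \<omega>))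
     = c0 + c1 * ex P + c2 * ey P + c3 * exx P + c4 * eyy P + c5 * exy P"
proof -
  interpret prob_space P using Ps_prob[OF P] by simp
  note i = integ[OF P]
  show ?thesis using i unfolding ex_def ey_def exx_def eyy_def exy_def
    by (simp add: prob_space)
qed

definition "lin P \<beta> \<gamma> = \<beta> * ex P + \<gamma> * ey P"
definition "sec P \<beta> \<gamma> = \<beta>\<^sup>2 * exx P + 2 * \<beta> * \<gamma> * exy P + \<gamma>\<^sup>2 * eyy P"
definition "vr P \<beta> \<gamma> = sec P \<beta> \<gamma> - (lin P \<beta> \<gamma>)\<^sup>2"
definition "cv P = exy P - ex P * ey P"
definition "mvar P1 P2 t \<beta> \<gamma> = t * vr P1 \<beta> \<gamma> + (1 - t) * vr P2 \<beta> \<gamma> + t * (1 - t) * (lin P1 \<beta> \<gamma> - lin P2 \<beta> \<gamma>)\<^sup>2"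
definition "mcov P1 P2 t = t * cv P1 + (1 - t) * cv P2 + t * (1 - t) * (ex P1 - ex P2) * (ey P1 - ey P2)"
definition "hp P \<mu>1 \<mu>2 = exy P - \<mu>2 * ex P - \<mu>1 * ey P + \<mu>1 * \<mu>2"

lemma E_sq: "P \<in> Ps \<Longrightarrow> integral\<^sup>L P (\<lambda>\<omega>. (\<beta> * X \<omega> + \<gamma> * Y \<omega> - \<mu>)\<^sup>2) = sec P \<beta> \<gamma> - 2 * \<mu> * lin P \<beta> \<gamma> + \<mu>\<^sup>2"
proof -
  assume P: "P \<in> Ps"
  have "(\<lambda>\<omega>. (\<beta> * X \<omega> + \<gamma> * Y \<omega> - \<mu>)\<^sup>2) = (\<lambda>\<omega>. \<mu>\<^sup>2 + (-2*\<mu>*\<beta>) * X \<omega> + (-2*\<mu>*\<gamma>) * Y \<omega> + \<beta>\<^sup>2 * (X \<omega>)\<^sup>2 + \<gamma>\<^sup>2 * (Y \<omega>)\<^sup>2 + (2*\<beta>*\<gamma>) * (X \<omega> * Y \<omega>))"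
    by (rule ext) (simp add: power2_eq_square algebra_simps)
  then have "integral\<^sup>L P (\<lambda>\<omega>. (\<beta> * X \<omega> + \<gamma> * Y \<omega> - \<mu>)\<^sup>2) = \<mu>\<^sup>2 + (-2*\<mu>*\<beta>) * ex P + (-2*\<mu>*\<gamma>) * ey P + \<beta>\<^sup>2 * exx P + \<gamma>\<^sup>2 * eyy P + (2*\<beta>*\<gamma>) * exy P"
    by (simp only: int_poly[OF P])
  then show ?thesis unfolding sec_def lin_def by (simp add: algebra_simps)
qed

lemma E_nsq: "P \<in> Ps \<Longrightarrow> integral\<^sup>L P (\<lambda>\<omega>. - (\<beta> * X \<omega> + \<gamma> * Y \<omega> - \<mu>)\<^sup>2) = - (sec P \<beta> \<gamma> - 2 * \<mu> * lin P \<beta> \<gamma> + \<mu>\<^sup>2)"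
  by (simp only: Bochner_Integration.integral_minus E_sq)

lemma E_lin: "P \<in> Ps \<Longrightarrow> integral\<^sup>L P (\<lambda>\<omega>. \<beta> * X \<omega> + \<gamma> * Y \<omega>) = lin P \<beta> \<gamma>"
proof -
  assume P: "P \<in> Ps"
  have "(\<lambda>\<omega>. \<beta> * X \<omega> + \<gamma> * Y \<omega>) = (\<lambda>\<omega>. 0 + \<beta> * X \<omega> + \<gamma> * Y \<omega> + 0 * (X \<omega>)\<^sup>2 + 0 * (Y \<omega>)\<^sup>2 + 0 * (X \<omega> * Y \<omega>))"
    by simp
  then have "integral\<^sup>L P (\<lambda>\<omega>. \<beta> * X \<omega> + \<gamma> * Y \<omega>) = 0 + \<beta> * ex P + \<gamma> * ey P + 0 * exx P + 0 * eyy P + 0 * exy P"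
    by (simp only: int_poly[OF P])
  then show ?thesis unfolding lin_def by simp
qed

lemma E_nlin: "P \<in> Ps \<Longrightarrow> integral\<^sup>L P (\<lambda>\<omega>. - (\<beta> * X \<omega> + \<gamma> * Y \<omega>)) = - lin P \<beta> \<gamma>"
  by (simp only: Bochner_Integration.integral_minus E_lin)

lemma E_pr: "P \<in> Ps \<Longrightarrow> integral\<^sup>L P (\<lambda>\<omega>. (X \<omega> - \<mu>1) * (Y \<omega> - \<mu>2)) = hp P \<mu>1 \<mu>2"
proof -
  assume P: "P \<in> Ps"
  have "(\<lambda>\<omega>. (X \<omega> - \<mu>1) * (Y \<omega> - \<mu>2)) = (\<lambda>\<omega>. \<mu>1*\<mu>2 + (-\<mu>2) * X \<omega> + (-\<mu>1) * Y \<omega> + 0 * (X \<omega>)\<^sup>2 + 0 * (Y \<omega>)\<^sup>2 + 1 * (X \<omega> * Y \<omega>))"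
    by (rule ext) (simp add: algebra_simps)
  then have "integral\<^sup>L P (\<lambda>\<omega>. (X \<omega> - \<mu>1) * (Y \<omega> - \<mu>2)) = \<mu>1*\<mu>2 + (-\<mu>2) * ex P + (-\<mu>1) * ey P + 0 * exx P + 0 * eyy P + 1 * exy P"
    by (simp only: int_poly[OF P])
  then show ?thesis unfolding hp_def by (simp add: algebra_simps)
qed

lemma E_npr: "P \<in> Ps \<Longrightarrow> integral\<^sup>L P (\<lambda>\<omega>. - ((X \<omega> - \<mu>1) * (Y \<omega> - \<mu>2))) = - hp P \<mu>1 \<mu>2"
  by (simp only: Bochner_Integration.integral_minus E_pr)

lemma vr_nonneg: "P \<in> Ps \<Longrightarrow> vr P \<beta> \<gamma> \<ge> 0"
proof -
  assume P: "P \<in> Ps"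
  have "0 \<le> integral\<^sup>L P (\<lambda>\<omega>. (\<beta> * X \<omega> + \<gamma> * Y \<omega> - lin P \<beta> \<gamma>)\<^sup>2)" by simp
  also have "\<dots> = vr P \<beta> \<gamma>" using E_sq[OF P] unfolding vr_def by (simp add: power2_eq_square)
  finally show ?thesis .
qed

lemma sec_nonneg: "P \<in> Ps \<Longrightarrow> sec P \<beta> \<gamma> \<ge> 0"
proof -
  assume "P \<in> Ps"
  then have "0 \<le> sec P \<beta> \<gamma> - (lin P \<beta> \<gamma>)\<^sup>2" using vr_nonneg[of P \<beta> \<gamma>] unfolding vr_def by simp
  moreover have "0 \<le> (lin P \<beta> \<gamma>)\<^sup>2" by simp
  ultimately show ?thesis by linarith
qed

definition bnd :: "('a measure \<Rightarrow> real) \<Rightarrow> bool" where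
  "bnd f \<longleftrightarrow> (\<exists>K. \<forall>P\<in>Ps. \<bar>f P\<bar> \<le> K)"

lemma bnd_const[intro]: "bnd (\<lambda>P. c)" unfolding bnd_def by blast
lemma bnd_add[intro]: "bnd f \<Longrightarrow> bnd g \<Longrightarrow> bnd (\<lambda>P. f P + g P)"
  unfolding bnd_def by (metis (no_types, lifting) abs_triangle_ineq add_mono order_trans)
lemma bnd_minus[intro]: "bnd f \<Longrightarrow> bnd (\<lambda>P. - f P)" unfolding bnd_def by simp
lemma bnd_diff[intro]: "bnd f \<Longrightarrow> bnd g \<Longrightarrow> bnd (\<lambda>P. f P - g P)"
  using bnd_add[of f "\<lambda>P. - g P"] bnd_minus[of g] by simp
lemma bnd_mult[intro]: "bnd f \<Longrightarrow> bnd g \<Longrightarrow> bnd (\<lambda>P. f P * g P)"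
proof -
  assume "bnd f" "bnd g"
  then obtain K L where K: "\<forall>P\<in>Ps. \<bar>f P\<bar> \<le> K" and L: "\<forall>P\<in>Ps. \<bar>g P\<bar> \<le> L" unfolding bnd_def by blast
  have "\<forall>P\<in>Ps. \<bar>f P * g P\<bar> \<le> K * L"
    using K L by (simp add: abs_mult mult_mono')
  then show ?thesis unfolding bnd_def by blast
qed
lemma bnd_pow[intro]: "bnd f \<Longrightarrow> bnd (\<lambda>P. (f P)\<^sup>2)"
  using bnd_mult[of f f] by (simp add: power2_eq_square)

lemma exx_bnd: "bnd exx"
proof -
  obtain K where K: "\<And>P. P \<in> Ps \<Longrightarrow> exx P \<le> K" using X2_bdd unfolding bdd_above_def exx_def by auto
  have "\<forall>P\<in>Ps. \<bar>exx P\<bar> \<le> K" using K sec_nonneg[of _ 1 0] unfolding sec_def by simp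
  then show ?thesis unfolding bnd_def by blast
qed
lemma eyy_bnd: "bnd eyy"
proof -
  obtain K where K: "\<And>P. P \<in> Ps \<Longrightarrow> eyy P \<le> K" using Y2_bdd unfolding bdd_above_def eyy_def by auto
  have "\<forall>P\<in>Ps. \<bar>eyy P\<bar> \<le> K" using K sec_nonneg[of _ 0 1] unfolding sec_def by simp
  then show ?thesis unfolding bnd_def by blast
qed
lemma ex_bnd: "bnd ex"
proof -
  obtain K where K: "\<forall>P\<in>Ps. \<bar>exx P\<bar> \<le> K" using exx_bnd unfolding bnd_def by blast
  have "\<forall>P\<in>Ps. \<bar>ex P\<bar> \<le> 1 + K"
  proof
    fix P assume P: "P \<in> Ps"
    have "(ex P)\<^sup>2 \<le> exx P" using vr_nonneg[OF P, of 1 0] unfolding vr_def sec_def lin_def by simp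
    moreover have "\<bar>ex P\<bar> \<le> 1 + (ex P)\<^sup>2" by (rule abs_le_1_sq)
    ultimately show "\<bar>ex P\<bar> \<le> 1 + K" using K P by fastforce
  qed
  then show ?thesis unfolding bnd_def by blast
qed
lemma ey_bnd: "bnd ey"
proof -
  obtain K where K: "\<forall>P\<in>Ps. \<bar>eyy P\<bar> \<le> K" using eyy_bnd unfolding bnd_def by blast
  have "\<forall>P\<in>Ps. \<bar>ey P\<bar> \<le> 1 + K"
  proof
    fix P assume P: "P \<in> Ps"
    have "(ey P)\<^sup>2 \<le> eyy P" using vr_nonneg[OF P, of 0 1] unfolding vr_def sec_def lin_def by simp
    moreover have "\<bar>ey P\<bar> \<le> 1 + (ey P)\<^sup>2" by (rule abs_le_1_sq)
    ultimately show "\<bar>ey P\<bar> \<le> 1 + K" using K P by fastforce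
  qed
  then show ?thesis unfolding bnd_def by blast
qed
lemma exy_bnd: "bnd exy"
proof -
  obtain K where K: "\<forall>P\<in>Ps. \<bar>exx P\<bar> \<le> K" using exx_bnd unfolding bnd_def by blast
  obtain L where L: "\<forall>P\<in>Ps. \<bar>eyy P\<bar> \<le> L" using eyy_bnd unfolding bnd_def by blast
  have "\<forall>P\<in>Ps. \<bar>exy P\<bar> \<le> K + L"
  proof
    fix P assume P: "P \<in> Ps"
    have "0 \<le> exx P + 2 * exy P + eyy P" using sec_nonneg[OF P, of 1 1] unfolding sec_def by simp
    moreover have "0 \<le> exx P - 2 * exy P + eyy P" using sec_nonneg[OF P, of 1 "-1"] unfolding sec_def by simp
    ultimately show "\<bar>exy P\<bar> \<le> K + L" using K L P by fastforce
  qed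
  then show ?thesis unfolding bnd_def by blast
qed

lemmas mom_bnd = exx_bnd eyy_bnd ex_bnd ey_bnd exy_bnd

lemma sup_ge: "bnd f \<Longrightarrow> P \<in> Ps \<Longrightarrow> f P \<le> (SUP P\<in>Ps. f P)"
  unfolding bnd_def by (rule cSUP_upper) (auto simp: bdd_above_def abs_le_iff intro: order_trans)
lemma sup_le: fixes f :: "'a measure \<Rightarrow> real" assumes "\<And>P. P \<in> Ps \<Longrightarrow> f P \<le> c" shows "(SUP P\<in>Ps. f P) \<le> c"
  using Ps_ne assms by (rule cSUP_least)


definition "qf P \<beta> \<gamma> \<mu> = sec P \<beta> \<gamma> - 2 * \<mu> * lin P \<beta> \<gamma> + \<mu>\<^sup>2"

lemma qf_eq: "qf P \<beta> \<gamma> \<mu> = vr P \<beta> \<gamma> + (lin P \<beta> \<gamma> - \<mu>)\<^sup>2"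
  unfolding qf_def vr_def by (simp add: power2_eq_square algebra_simps)

lemma qf_nonneg: "P \<in> Ps \<Longrightarrow> qf P \<beta> \<gamma> \<mu> \<ge> 0"
  unfolding qf_eq using vr_nonneg[of P \<beta> \<gamma>] by simp

lemma bnd_qf: "bnd (\<lambda>P. qf P \<beta> \<gamma> \<mu>)"
  unfolding qf_def sec_def lin_def using mom_bnd by (intro bnd_add bnd_diff bnd_mult bnd_pow bnd_const) auto
lemma bnd_nqf: "bnd (\<lambda>P. - qf P \<beta> \<gamma> \<mu>)"
  using bnd_qf by (rule bnd_minus)
lemma bnd_lin: "bnd (\<lambda>P. lin P \<beta> \<gamma>)"
  unfolding lin_def using mom_bnd by (intro bnd_add bnd_mult bnd_const) auto
lemma bnd_nlin: "bnd (\<lambda>P. - lin P \<beta> \<gamma>)"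
  using bnd_lin by (rule bnd_minus)

lemma ue_sq: "upper_exp Ps (\<lambda>\<omega>. (\<beta> * X \<omega> + \<gamma> * Y \<omega> - \<mu>)\<^sup>2) = (SUP P\<in>Ps. qf P \<beta> \<gamma> \<mu>)"
  unfolding upper_exp_def qf_def by (rule SUP_cong[OF refl]) (simp only: E_sq)
lemma ue_nsq: "upper_exp Ps (\<lambda>\<omega>. - (\<beta> * X \<omega> + \<gamma> * Y \<omega> - \<mu>)\<^sup>2) = (SUP P\<in>Ps. - qf P \<beta> \<gamma> \<mu>)"
  unfolding upper_exp_def qf_def by (rule SUP_cong[OF refl]) (simp only: E_nsq)
lemma ue_lin: "upper_exp Ps (\<lambda>\<omega>. \<beta> * X \<omega> + \<gamma> * Y \<omega>) = (SUP P\<in>Ps. lin P \<beta> \<gamma>)"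
  unfolding upper_exp_def by (rule SUP_cong[OF refl]) (simp only: E_lin)
lemma ue_nlin: "upper_exp Ps (\<lambda>\<omega>. - (\<beta> * X \<omega> + \<gamma> * Y \<omega>)) = (SUP P\<in>Ps. - lin P \<beta> \<gamma>)"
  unfolding upper_exp_def by (rule SUP_cong[OF refl]) (simp only: E_nlin)
lemma ue_pr: "upper_exp Ps (\<lambda>\<omega>. (X \<omega> - \<mu>1) * (Y \<omega> - \<mu>2)) = (SUP P\<in>Ps. hp P \<mu>1 \<mu>2)"
  unfolding upper_exp_def by (rule SUP_cong[OF refl]) (simp only: E_pr)
lemma ue_npr: "upper_exp Ps (\<lambda>\<omega>. - ((X \<omega> - \<mu>1) * (Y \<omega> - \<mu>2))) = (SUP P\<in>Ps. - hp P \<mu>1 \<mu>2)"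
  unfolding upper_exp_def by (rule SUP_cong[OF refl]) (simp only: E_npr)

context
  fixes W \<beta> \<gamma>
  assumes hW: "W = (\<lambda>\<omega>. \<beta> * X \<omega> + \<gamma> * Y \<omega>)"
begin

lemma um: "upper_mean Ps W = (SUP P\<in>Ps. lin P \<beta> \<gamma>)"
  unfolding upper_mean_def hW ue_lin ..
lemma lm: "lower_mean Ps W = - (SUP P\<in>Ps. - lin P \<beta> \<gamma>)"
  unfolding lower_mean_def hW using ue_nlin by simp

lemma lin_in: "P \<in> Ps \<Longrightarrow> lower_mean Ps W \<le> lin P \<beta> \<gamma> \<and> lin P \<beta> \<gamma> \<le> upper_mean Ps W"
  unfolding um lm using sup_ge[OF bnd_lin[of \<beta> \<gamma>], of P] sup_ge[OF bnd_nlin[of \<beta> \<gamma>], of P] by linarith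

lemma mi_ne: "lower_mean Ps W \<le> upper_mean Ps W"
  using lin_in Ps_ne by fastforce

lemma mi_ne': "mean_interval Ps W \<noteq> {}"
  unfolding mean_interval_def using mi_ne by simp

lemma mix_in: "P1 \<in> Ps \<Longrightarrow> P2 \<in> Ps \<Longrightarrow> 0 \<le> t \<Longrightarrow> t \<le> 1 \<Longrightarrow>
   t * lin P1 \<beta> \<gamma> + (1 - t) * lin P2 \<beta> \<gamma> \<in> mean_interval Ps W"
proof -
  assume a: "P1 \<in> Ps" "P2 \<in> Ps" "0 \<le> t" "t \<le> 1"
  let ?lo = "lower_mean Ps W" and ?hi = "upper_mean Ps W"
  have "t * lin P1 \<beta> \<gamma> + (1 - t) * lin P2 \<beta> \<gamma> \<le> ?hi"
    using lin_in[OF a(1)] lin_in[OF a(2)] a by (intro convex_bound_le) auto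
  moreover have "-(t * lin P1 \<beta> \<gamma> + (1 - t) * lin P2 \<beta> \<gamma>) \<le> - ?lo"
  proof -
    have "t * (- lin P1 \<beta> \<gamma>) + (1 - t) * (- lin P2 \<beta> \<gamma>) \<le> - ?lo"
      using lin_in[OF a(1)] lin_in[OF a(2)] a by (intro convex_bound_le) auto
    then show ?thesis by simp
  qed
  ultimately show ?thesis unfolding mean_interval_def by simp
qed

lemma mi_bound: "\<exists>B. \<forall>\<mu>\<in>mean_interval Ps W. \<bar>\<mu>\<bar> \<le> B"
proof -
  obtain K where K: "\<forall>P\<in>Ps. \<bar>lin P \<beta> \<gamma>\<bar> \<le> K" using bnd_lin unfolding bnd_def by blast
  have "upper_mean Ps W \<le> K" unfolding um by (rule sup_le) (use K in auto)
  moreover have "(SUP P\<in>Ps. - lin P \<beta> \<gamma>) \<le> K" by (rule sup_le) (use K in auto)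
  ultimately have "\<forall>\<mu>\<in>mean_interval Ps W. \<bar>\<mu>\<bar> \<le> K" unfolding mean_interval_def lm by auto
  then show ?thesis by blast
qed

lemma ue_W: "upper_exp Ps (\<lambda>\<omega>. (W \<omega> - \<mu>)\<^sup>2) = (SUP P\<in>Ps. qf P \<beta> \<gamma> \<mu>)"
  unfolding hW using ue_sq by simp
lemma ue_nW: "upper_exp Ps (\<lambda>\<omega>. - (W \<omega> - \<mu>)\<^sup>2) = (SUP P\<in>Ps. - qf P \<beta> \<gamma> \<mu>)"
  unfolding hW using ue_nsq by simp

lemma mix_sq: "t * (v1 + x\<^sup>2) + (1-t) * (v2 + y\<^sup>2) - (t * v1 + (1-t) * v2 + t*(1-t)*(x-y)\<^sup>2) = (t*x + (1-t)*y)\<^sup>2"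
  for t v1 v2 x y :: real
  by (simp add: power2_eq_square algebra_simps)

lemma UV1:
  assumes P: "P1 \<in> Ps" "P2 \<in> Ps" and t: "0 \<le> t" "t \<le> 1"
  shows "mvar P1 P2 t \<beta> \<gamma> \<le> upper_var Ps W"
  unfolding upper_var_def
proof (rule cINF_greatest[OF mi_ne'])
  fix \<mu> assume "\<mu> \<in> mean_interval Ps W"
  have q1: "qf P1 \<beta> \<gamma> \<mu> \<le> (SUP P\<in>Ps. qf P \<beta> \<gamma> \<mu>)" by (rule sup_ge[OF bnd_qf P(1)])
  have q2: "qf P2 \<beta> \<gamma> \<mu> \<le> (SUP P\<in>Ps. qf P \<beta> \<gamma> \<mu>)" by (rule sup_ge[OF bnd_qf P(2)])
  have "t * qf P1 \<beta> \<gamma> \<mu> + (1 - t) * qf P2 \<beta> \<gamma> \<mu> - mvar P1 P2 t \<beta> \<gamma>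
        = (t*(lin P1 \<beta> \<gamma> - \<mu>) + (1-t)*(lin P2 \<beta> \<gamma> - \<mu>))\<^sup>2"
    unfolding qf_eq mvar_def using mix_sq[of t "vr P1 \<beta> \<gamma>" "lin P1 \<beta> \<gamma> - \<mu>" "vr P2 \<beta> \<gamma>" "lin P2 \<beta> \<gamma> - \<mu>"]
    by simp
  then have "mvar P1 P2 t \<beta> \<gamma> \<le> t * qf P1 \<beta> \<gamma> \<mu> + (1 - t) * qf P2 \<beta> \<gamma> \<mu>"
    by (smt (verit) zero_le_power2)
  also have "\<dots> \<le> (SUP P\<in>Ps. qf P \<beta> \<gamma> \<mu>)"
    using q1 q2 t by (intro convex_bound_le) auto
  finally show "mvar P1 P2 t \<beta> \<gamma> \<le> upper_exp Ps (\<lambda>\<omega>. (W \<omega> - \<mu>)\<^sup>2)" unfolding ue_W .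
qed

lemma UV2:
  assumes K: "\<And>P1 P2 t. P1 \<in> Ps \<Longrightarrow> P2 \<in> Ps \<Longrightarrow> 0 \<le> t \<Longrightarrow> t \<le> 1 \<Longrightarrow> mvar P1 P2 t \<beta> \<gamma> \<le> K"
  shows "upper_var Ps W \<le> K"
proof -
  have vrK: "vr P \<beta> \<gamma> \<le> K" if "P \<in> Ps" for P using K[OF that that, of 1] unfolding mvar_def by simp
  define r where "r P = sqrt (K - vr P \<beta> \<gamma>)" for P
  have r2: "(r P)\<^sup>2 = K - vr P \<beta> \<gamma>" if "P \<in> Ps" for P unfolding r_def using vrK[OF that] by simp
  have r0: "r P \<ge> 0" if "P \<in> Ps" for P unfolding r_def using vrK[OF that] by simp
  obtain \<mu> where \<mu>: "\<mu> \<in> {lower_mean Ps W..upper_mean Ps W}" and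
    close: "\<forall>P\<in>Ps. \<bar>lin P \<beta> \<gamma> - \<mu>\<bar> \<le> r P"
  proof (rule helly_interval[of "lower_mean Ps W" "upper_mean Ps W" Ps "\<lambda>P. lin P \<beta> \<gamma>" r, THEN bexE])
    show "lower_mean Ps W \<le> upper_mean Ps W" by (rule mi_ne)
    show "\<And>P. P \<in> Ps \<Longrightarrow> lower_mean Ps W \<le> lin P \<beta> \<gamma> \<and> lin P \<beta> \<gamma> \<le> upper_mean Ps W" by (rule lin_in)
    show "\<And>P. P \<in> Ps \<Longrightarrow> 0 \<le> r P" by (rule r0)
    fix P Q assume PQ: "P \<in> Ps" "Q \<in> Ps"
    have "\<bar>lin P \<beta> \<gamma> - lin Q \<beta> \<gamma>\<bar> \<le> r P + r Q"
    proof (rule pair_interval[OF r0[OF PQ(1)] r0[OF PQ(2)]])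
      fix t :: real assume t: "0 \<le> t" "t \<le> 1"
      have m: "mvar P Q t \<beta> \<gamma> \<le> K" by (rule K[OF PQ t])
      have "t*(K - vr P \<beta> \<gamma>) + (1-t)*(K - vr Q \<beta> \<gamma>) = K - (t * vr P \<beta> \<gamma> + (1-t) * vr Q \<beta> \<gamma>)"
        by (simp add: algebra_simps)
      then show "t * (1 - t) * (lin P \<beta> \<gamma> - lin Q \<beta> \<gamma>)\<^sup>2 \<le> t * (r P)\<^sup>2 + (1 - t) * (r Q)\<^sup>2"
        using m unfolding mvar_def r2[OF PQ(1)] r2[OF PQ(2)] by linarith
    qed
    then show "lin P \<beta> \<gamma> - r P \<le> lin Q \<beta> \<gamma> + r Q" by linarith
  qed (auto)
  have bb: "bdd_below ((\<lambda>\<mu>. upper_exp Ps (\<lambda>\<omega>. (W \<omega> - \<mu>)\<^sup>2)) ` mean_interval Ps W)"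
  proof (rule bdd_belowI)
    fix x assume "x \<in> (\<lambda>\<mu>. upper_exp Ps (\<lambda>\<omega>. (W \<omega> - \<mu>)\<^sup>2)) ` mean_interval Ps W"
    then obtain \<mu>' where x: "x = (SUP P\<in>Ps. qf P \<beta> \<gamma> \<mu>')" unfolding ue_W by auto
    obtain P0 where P0: "P0 \<in> Ps" using Ps_ne by auto
    show "0 \<le> x" unfolding x using qf_nonneg[OF P0] sup_ge[OF bnd_qf P0] by (meson order_trans)
  qed
  have "upper_var Ps W \<le> upper_exp Ps (\<lambda>\<omega>. (W \<omega> - \<mu>)\<^sup>2)"
    unfolding upper_var_def by (rule cINF_lower[OF bb]) (use \<mu> in \<open>simp add: mean_interval_def\<close>)
  also have "\<dots> \<le> K" unfolding ue_W
  proof (rule sup_le)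
    fix P assume P: "P \<in> Ps"
    have "\<bar>lin P \<beta> \<gamma> - \<mu>\<bar>\<^sup>2 \<le> (r P)\<^sup>2" using close P by (intro power_mono) auto
    then show "qf P \<beta> \<gamma> \<mu> \<le> K" unfolding qf_eq using r2[OF P] by simp
  qed
  finally show ?thesis .
qed

lemma LV1:
  assumes P: "P \<in> Ps"
  shows "lower_var Ps W \<le> vr P \<beta> \<gamma>"
proof -
  have bb: "bdd_below ((\<lambda>\<mu>. - upper_exp Ps (\<lambda>\<omega>. - (W \<omega> - \<mu>)\<^sup>2)) ` mean_interval Ps W)"
  proof (rule bdd_belowI)
    fix x assume "x \<in> (\<lambda>\<mu>. - upper_exp Ps (\<lambda>\<omega>. - (W \<omega> - \<mu>)\<^sup>2)) ` mean_interval Ps W"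
    then obtain \<mu>' where x: "x = - (SUP P\<in>Ps. - qf P \<beta> \<gamma> \<mu>')" unfolding ue_nW by auto
    have "(SUP P\<in>Ps. - qf P \<beta> \<gamma> \<mu>') \<le> 0" by (rule sup_le) (simp add: qf_nonneg)
    then show "0 \<le> x" unfolding x by simp
  qed
  have "lower_var Ps W \<le> - upper_exp Ps (\<lambda>\<omega>. - (W \<omega> - lin P \<beta> \<gamma>)\<^sup>2)"
    unfolding lower_var_def by (rule cINF_lower[OF bb]) (use lin_in[OF P] in \<open>simp add: mean_interval_def\<close>)
  also have "\<dots> \<le> qf P \<beta> \<gamma> (lin P \<beta> \<gamma>)" unfolding ue_nW using sup_ge[OF bnd_nqf[of \<beta> \<gamma> "lin P \<beta> \<gamma>"] P] by linarith
  also have "\<dots> = vr P \<beta> \<gamma>" unfolding qf_eq by simp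
  finally show ?thesis .
qed

lemma LV2:
  assumes L: "\<And>P. P \<in> Ps \<Longrightarrow> L \<le> vr P \<beta> \<gamma>"
  shows "L \<le> lower_var Ps W"
  unfolding lower_var_def
proof (rule cINF_greatest[OF mi_ne'])
  fix \<mu> assume "\<mu> \<in> mean_interval Ps W"
  have "(SUP P\<in>Ps. - qf P \<beta> \<gamma> \<mu>) \<le> - L"
  proof (rule sup_le)
    fix P assume P: "P \<in> Ps"
    show "- qf P \<beta> \<gamma> \<mu> \<le> - L" using L[OF P] unfolding qf_eq by (smt (verit) zero_le_power2)
  qed
  then show "L \<le> - upper_exp Ps (\<lambda>\<omega>. - (W \<omega> - \<mu>)\<^sup>2)" unfolding ue_nW by simp
qed

end


lemma hX: "X = (\<lambda>\<omega>. 1 * X \<omega> + 0 * Y \<omega>)" by simp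
lemma hY: "Y = (\<lambda>\<omega>. 0 * X \<omega> + 1 * Y \<omega>)" by simp

abbreviation "MX \<equiv> mean_interval Ps X"
abbreviation "MY \<equiv> mean_interval Ps Y"

lemma ex_in: "P \<in> Ps \<Longrightarrow> ex P \<in> MX"
  using lin_in[OF hX, of P] unfolding lin_def mean_interval_def by simp
lemma ey_in: "P \<in> Ps \<Longrightarrow> ey P \<in> MY"
  using lin_in[OF hY, of P] unfolding lin_def mean_interval_def by simp
lemma ex_in': "P \<in> Ps \<Longrightarrow> lower_mean Ps X \<le> ex P \<and> ex P \<le> upper_mean Ps X"
  using ex_in unfolding mean_interval_def by simp
lemma mixY: "P1 \<in> Ps \<Longrightarrow> P2 \<in> Ps \<Longrightarrow> 0 \<le> t \<Longrightarrow> t \<le> 1 \<Longrightarrow> t * ey P1 + (1 - t) * ey P2 \<in> MY"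
  using mix_in[OF hY] unfolding lin_def by simp
lemma MX_ne: "MX \<noteq> {}" by (rule mi_ne'[OF hX])
lemma MY_ne: "MY \<noteq> {}" by (rule mi_ne'[OF hY])
lemma MX_ne2: "lower_mean Ps X \<le> upper_mean Ps X" by (rule mi_ne[OF hX])

definition "H \<mu>1 \<mu>2 = (SUP P\<in>Ps. hp P \<mu>1 \<mu>2)"
definition "G \<mu>1 \<mu>2 = - (SUP P\<in>Ps. - hp P \<mu>1 \<mu>2)"

lemma uc_eq: "upper_cov Ps X Y = (SUP \<mu>2\<in>MY. INF \<mu>1\<in>MX. H \<mu>1 \<mu>2)"
  unfolding upper_cov_def ue_pr H_def ..
lemma lc_eq: "lower_cov Ps X Y = (INF \<mu>2\<in>MY. SUP \<mu>1\<in>MX. G \<mu>1 \<mu>2)"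
  unfolding lower_cov_def ue_npr G_def ..

lemma hp_cv: "hp P \<mu>1 \<mu>2 = cv P + (ex P - \<mu>1) * (ey P - \<mu>2)"
  unfolding hp_def cv_def by (simp add: algebra_simps)

lemma bnd_hp: "bnd (\<lambda>P. hp P \<mu>1 \<mu>2)"
  unfolding hp_def using mom_bnd by (intro bnd_add bnd_diff bnd_mult bnd_const) auto
lemma bnd_nhp: "bnd (\<lambda>P. - hp P \<mu>1 \<mu>2)"
  using bnd_hp by (rule bnd_minus)

lemma HG_bound: "\<exists>Kc. \<forall>\<mu>1\<in>MX. \<forall>\<mu>2\<in>MY. \<bar>H \<mu>1 \<mu>2\<bar> \<le> Kc \<and> \<bar>G \<mu>1 \<mu>2\<bar> \<le> Kc"
proof -
  obtain BX where BX: "\<forall>\<mu>\<in>MX. \<bar>\<mu>\<bar> \<le> BX" using mi_bound[OF hX] by blast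
  obtain BY where BY: "\<forall>\<mu>\<in>MY. \<bar>\<mu>\<bar> \<le> BY" using mi_bound[OF hY] by blast
  obtain Kx where Kx: "\<forall>P\<in>Ps. \<bar>ex P\<bar> \<le> Kx" using ex_bnd unfolding bnd_def by blast
  obtain Ky where Ky: "\<forall>P\<in>Ps. \<bar>ey P\<bar> \<le> Ky" using ey_bnd unfolding bnd_def by blast
  obtain Kxy where Kxy: "\<forall>P\<in>Ps. \<bar>exy P\<bar> \<le> Kxy" using exy_bnd unfolding bnd_def by blast
  define Kc where "Kc = Kxy + BY * Kx + BX * Ky + BX * BY"
  have hpb: "\<bar>hp P \<mu>1 \<mu>2\<bar> \<le> Kc" if P: "P \<in> Ps" and m: "\<mu>1 \<in> MX" "\<mu>2 \<in> MY" for P \<mu>1 \<mu>2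
  proof -
    have a1: "\<bar>\<mu>2 * ex P\<bar> \<le> BY * Kx" unfolding abs_mult using BY Kx P m by (intro mult_mono) auto
    have a2: "\<bar>\<mu>1 * ey P\<bar> \<le> BX * Ky" unfolding abs_mult using BX Ky P m by (intro mult_mono) auto
    have a3: "\<bar>\<mu>1 * \<mu>2\<bar> \<le> BX * BY" unfolding abs_mult using BX BY m by (intro mult_mono) auto
    have a4: "\<bar>exy P\<bar> \<le> Kxy" using Kxy P by auto
    show ?thesis unfolding hp_def Kc_def using a1 a2 a3 a4 by arith
  qed
  obtain P0 where P0: "P0 \<in> Ps" using Ps_ne by auto
  have "\<forall>\<mu>1\<in>MX. \<forall>\<mu>2\<in>MY. \<bar>H \<mu>1 \<mu>2\<bar> \<le> Kc \<and> \<bar>G \<mu>1 \<mu>2\<bar> \<le> Kc"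
  proof (intro ballI conjI)
    fix \<mu>1 \<mu>2 assume m: "\<mu>1 \<in> MX" "\<mu>2 \<in> MY"
    have u1: "H \<mu>1 \<mu>2 \<le> Kc" unfolding H_def by (rule sup_le) (use hpb m in \<open>auto simp: abs_le_iff\<close>)
    have u2: "hp P0 \<mu>1 \<mu>2 \<le> H \<mu>1 \<mu>2" unfolding H_def by (rule sup_ge[OF bnd_hp P0])
    have u3: "(SUP P\<in>Ps. - hp P \<mu>1 \<mu>2) \<le> Kc" by (rule sup_le) (use hpb m in \<open>auto simp: abs_le_iff\<close>)
    have u4: "- hp P0 \<mu>1 \<mu>2 \<le> (SUP P\<in>Ps. - hp P \<mu>1 \<mu>2)" by (rule sup_ge[OF bnd_nhp P0])
    show "\<bar>H \<mu>1 \<mu>2\<bar> \<le> Kc" using u1 u2 hpb[OF P0 m] by arith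
    show "\<bar>G \<mu>1 \<mu>2\<bar> \<le> Kc" unfolding G_def using u3 u4 hpb[OF P0 m] by arith
  qed
  then show ?thesis by blast
qed

lemma HG_bound2: "\<exists>Kc. \<forall>a b. a \<in> MX \<longrightarrow> b \<in> MY \<longrightarrow> - Kc \<le> H a b \<and> H a b \<le> Kc \<and> - Kc \<le> G a b \<and> G a b \<le> Kc"
proof -
  obtain Kc where Kc: "\<forall>\<mu>1\<in>MX. \<forall>\<mu>2\<in>MY. \<bar>H \<mu>1 \<mu>2\<bar> \<le> Kc \<and> \<bar>G \<mu>1 \<mu>2\<bar> \<le> Kc" using HG_bound by blast
  have "\<forall>a b. a \<in> MX \<longrightarrow> b \<in> MY \<longrightarrow> - Kc \<le> H a b \<and> H a b \<le> Kc \<and> - Kc \<le> G a b \<and> G a b \<le> Kc"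
  proof (intro allI impI)
    fix a b assume "a \<in> MX" "b \<in> MY"
    then have "\<bar>H a b\<bar> \<le> Kc" "\<bar>G a b\<bar> \<le> Kc" using Kc by auto
    then show "- Kc \<le> H a b \<and> H a b \<le> Kc \<and> - Kc \<le> G a b \<and> G a b \<le> Kc" by (simp add: abs_le_iff)
  qed
  then show ?thesis by blast
qed

lemma UC1:
  assumes P: "P1 \<in> Ps" "P2 \<in> Ps" and t: "0 \<le> t" "t \<le> 1"
  shows "mcov P1 P2 t \<le> upper_cov Ps X Y"
proof -
  obtain Kc where Kc: "\<And>a b. a \<in> MX \<Longrightarrow> b \<in> MY \<Longrightarrow> - Kc \<le> H a b \<and> H a b \<le> Kc \<and> - Kc \<le> G a b \<and> G a b \<le> Kc" using HG_bound2 by blast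
  define \<mu>2 where "\<mu>2 = t * ey P1 + (1 - t) * ey P2"
  have m2: "\<mu>2 \<in> MY" unfolding \<mu>2_def by (rule mixY[OF P t])
  have inner: "mcov P1 P2 t \<le> (INF \<mu>1\<in>MX. H \<mu>1 \<mu>2)"
  proof (rule cINF_greatest[OF MX_ne])
    fix \<mu>1 assume "\<mu>1 \<in> MX"
    have e: "mcov P1 P2 t = t * hp P1 \<mu>1 \<mu>2 + (1 - t) * hp P2 \<mu>1 \<mu>2"
      unfolding mcov_def hp_cv \<mu>2_def by (simp add: algebra_simps)
    show "mcov P1 P2 t \<le> H \<mu>1 \<mu>2" unfolding e H_def
      using sup_ge[OF bnd_hp P(1), of \<mu>1 \<mu>2] sup_ge[OF bnd_hp P(2), of \<mu>1 \<mu>2] t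
      by (intro convex_bound_le) auto
  qed
  have ba: "bdd_above ((\<lambda>\<mu>2. INF \<mu>1\<in>MX. H \<mu>1 \<mu>2) ` MY)"
  proof (rule bdd_aboveI)
    fix x assume "x \<in> (\<lambda>\<mu>2. INF \<mu>1\<in>MX. H \<mu>1 \<mu>2) ` MY"
    then obtain m where m: "m \<in> MY" and x: "x = (INF \<mu>1\<in>MX. H \<mu>1 m)" by auto
    have lo: "lower_mean Ps X \<in> MX" unfolding mean_interval_def using MX_ne2 by simp
    have bb: "bdd_below ((\<lambda>\<mu>1. H \<mu>1 m) ` MX)"
      by (rule bdd_belowI[of _ "- Kc"]) (use Kc m in auto)
    have "x \<le> H (lower_mean Ps X) m" unfolding x by (rule cINF_lower[OF bb lo])
    also have "\<dots> \<le> Kc" using Kc m lo by auto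
    finally show "x \<le> Kc" .
  qed
  have "(INF \<mu>1\<in>MX. H \<mu>1 \<mu>2) \<le> upper_cov Ps X Y" unfolding uc_eq by (rule cSUP_upper[OF m2 ba])
  with inner show ?thesis by linarith
qed

lemma UC2:
  assumes K: "\<And>P1 P2 t. P1 \<in> Ps \<Longrightarrow> P2 \<in> Ps \<Longrightarrow> 0 \<le> t \<Longrightarrow> t \<le> 1 \<Longrightarrow> mcov P1 P2 t \<le> K"
  shows "upper_cov Ps X Y \<le> K"
  unfolding uc_eq
proof (rule cSUP_least[OF MY_ne])
  fix \<mu>2 assume m2: "\<mu>2 \<in> MY"
  obtain Kc where Kc: "\<And>a b. a \<in> MX \<Longrightarrow> b \<in> MY \<Longrightarrow> - Kc \<le> H a b \<and> H a b \<le> Kc \<and> - Kc \<le> G a b \<and> G a b \<le> Kc" using HG_bound2 by blast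
  have cvK: "cv P \<le> K" if "P \<in> Ps" for P using K[OF that that, of 1] unfolding mcov_def by simp
  obtain \<mu>1 where m1: "\<mu>1 \<in> {lower_mean Ps X..upper_mean Ps X}" and
    c: "\<forall>P\<in>Ps. (ex P - \<mu>1) * (ey P - \<mu>2) \<le> K - cv P"
  proof (rule helly_half[of "lower_mean Ps X" "upper_mean Ps X" Ps ex "\<lambda>P. K - cv P" "\<lambda>P. ey P - \<mu>2", THEN bexE])
    show "lower_mean Ps X \<le> upper_mean Ps X" by (rule MX_ne2)
    show "\<And>P. P \<in> Ps \<Longrightarrow> lower_mean Ps X \<le> ex P \<and> ex P \<le> upper_mean Ps X" by (rule ex_in')
    show "\<And>P. P \<in> Ps \<Longrightarrow> 0 \<le> K - cv P" using cvK by simp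
    fix P Q assume PQ: "P \<in> Ps" "Q \<in> Ps" and bp: "0 < ey P - \<mu>2" and bq: "ey Q - \<mu>2 < 0"
    show "ex P - (K - cv P) / (ey P - \<mu>2) \<le> ex Q - (K - cv Q) / (ey Q - \<mu>2)"
    proof (rule pair_half2[OF bp bq])
      fix t :: real assume t: "0 \<le> t" "t \<le> 1"
      have m: "mcov P Q t \<le> K" by (rule K[OF PQ t])
      have e1: "t * (K - cv P) + (1 - t) * (K - cv Q) = K - (t * cv P + (1 - t) * cv Q)" by (simp add: algebra_simps)
      have e2: "t * (1 - t) * (ex P - ex Q) * (ey P - \<mu>2 - (ey Q - \<mu>2)) = t * (1 - t) * (ex P - ex Q) * (ey P - ey Q)"
        by simp
      show "t * (1 - t) * (ex P - ex Q) * (ey P - \<mu>2 - (ey Q - \<mu>2)) \<le> t * (K - cv P) + (1 - t) * (K - cv Q)"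
        using m unfolding e1 e2 mcov_def by linarith
    qed
  qed auto
  have m1': "\<mu>1 \<in> MX" using m1 unfolding mean_interval_def by simp
  have bb: "bdd_below ((\<lambda>\<mu>1. H \<mu>1 \<mu>2) ` MX)"
    by (rule bdd_belowI[of _ "- Kc"]) (use Kc m2 in auto)
  have "(INF \<mu>1\<in>MX. H \<mu>1 \<mu>2) \<le> H \<mu>1 \<mu>2" by (rule cINF_lower[OF bb m1'])
  also have "\<dots> \<le> K" unfolding H_def
  proof (rule sup_le)
    fix P assume "P \<in> Ps"
    then show "hp P \<mu>1 \<mu>2 \<le> K" unfolding hp_cv using c by fastforce
  qed
  finally show "(INF \<mu>1\<in>MX. H \<mu>1 \<mu>2) \<le> K" .
qed

lemma LC1:
  assumes P: "P \<in> Ps"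
  shows "lower_cov Ps X Y \<le> cv P"
proof -
  obtain Kc where Kc: "\<And>a b. a \<in> MX \<Longrightarrow> b \<in> MY \<Longrightarrow> - Kc \<le> H a b \<and> H a b \<le> Kc \<and> - Kc \<le> G a b \<and> G a b \<le> Kc" using HG_bound2 by blast
  have bb: "bdd_below ((\<lambda>\<mu>2. SUP \<mu>1\<in>MX. G \<mu>1 \<mu>2) ` MY)"
  proof (rule bdd_belowI)
    fix x assume "x \<in> (\<lambda>\<mu>2. SUP \<mu>1\<in>MX. G \<mu>1 \<mu>2) ` MY"
    then obtain m where m: "m \<in> MY" and x: "x = (SUP \<mu>1\<in>MX. G \<mu>1 m)" by auto
    have lo: "lower_mean Ps X \<in> MX" unfolding mean_interval_def using MX_ne2 by simp
    have ba: "bdd_above ((\<lambda>\<mu>1. G \<mu>1 m) ` MX)"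
      by (rule bdd_aboveI[of _ "Kc"]) (use Kc m in auto)
    have "- Kc \<le> G (lower_mean Ps X) m" using Kc m lo by auto
    also have "\<dots> \<le> x" unfolding x by (rule cSUP_upper[OF lo ba])
    finally show "- Kc \<le> x" .
  qed
  have "lower_cov Ps X Y \<le> (SUP \<mu>1\<in>MX. G \<mu>1 (ey P))" unfolding lc_eq by (rule cINF_lower[OF bb ey_in[OF P]])
  also have "\<dots> \<le> cv P"
  proof (rule cSUP_least[OF MX_ne])
    fix \<mu>1 assume "\<mu>1 \<in> MX"
    have "- hp P \<mu>1 (ey P) \<le> (SUP P'\<in>Ps. - hp P' \<mu>1 (ey P))" by (rule sup_ge[OF bnd_nhp[of \<mu>1 "ey P"] P])
    then show "G \<mu>1 (ey P) \<le> cv P" unfolding G_def using hp_cv[of P \<mu>1 "ey P"] by simp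
  qed
  finally show ?thesis .
qed

lemma LC2:
  assumes K: "\<And>P1 P2 t. P1 \<in> Ps \<Longrightarrow> P2 \<in> Ps \<Longrightarrow> 0 \<le> t \<Longrightarrow> t \<le> 1 \<Longrightarrow> k \<le> mcov P1 P2 t"
  shows "k \<le> lower_cov Ps X Y"
  unfolding lc_eq
proof (rule cINF_greatest[OF MY_ne])
  fix \<mu>2 assume m2: "\<mu>2 \<in> MY"
  obtain Kc where Kc: "\<And>a b. a \<in> MX \<Longrightarrow> b \<in> MY \<Longrightarrow> - Kc \<le> H a b \<and> H a b \<le> Kc \<and> - Kc \<le> G a b \<and> G a b \<le> Kc" using HG_bound2 by blast
  have cvK: "k \<le> cv P" if "P \<in> Ps" for P using K[OF that that, of 1] unfolding mcov_def by simp
  obtain \<mu>1 where m1: "\<mu>1 \<in> {lower_mean Ps X..upper_mean Ps X}" and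
    c: "\<forall>P\<in>Ps. (ex P - \<mu>1) * (\<mu>2 - ey P) \<le> cv P - k"
  proof (rule helly_half[of "lower_mean Ps X" "upper_mean Ps X" Ps ex "\<lambda>P. cv P - k" "\<lambda>P. \<mu>2 - ey P", THEN bexE])
    show "lower_mean Ps X \<le> upper_mean Ps X" by (rule MX_ne2)
    show "\<And>P. P \<in> Ps \<Longrightarrow> lower_mean Ps X \<le> ex P \<and> ex P \<le> upper_mean Ps X" by (rule ex_in')
    show "\<And>P. P \<in> Ps \<Longrightarrow> 0 \<le> cv P - k" using cvK by simp
    fix P Q assume PQ: "P \<in> Ps" "Q \<in> Ps" and bp: "0 < \<mu>2 - ey P" and bq: "\<mu>2 - ey Q < 0"
    show "ex P - (cv P - k) / (\<mu>2 - ey P) \<le> ex Q - (cv Q - k) / (\<mu>2 - ey Q)"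
    proof (rule pair_half2[OF bp bq])
      fix t :: real assume t: "0 \<le> t" "t \<le> 1"
      have m: "k \<le> mcov P Q t" by (rule K[OF PQ t])
      have e1: "t * (cv P - k) + (1 - t) * (cv Q - k) = (t * cv P + (1 - t) * cv Q) - k" by (simp add: algebra_simps)
      have e2: "t * (1 - t) * (ex P - ex Q) * (\<mu>2 - ey P - (\<mu>2 - ey Q)) = - (t * (1 - t) * (ex P - ex Q) * (ey P - ey Q))"
        by (simp add: algebra_simps)
      show "t * (1 - t) * (ex P - ex Q) * (\<mu>2 - ey P - (\<mu>2 - ey Q)) \<le> t * (cv P - k) + (1 - t) * (cv Q - k)"
        using m unfolding e1 e2 mcov_def by linarith
    qed
  qed auto
  have m1': "\<mu>1 \<in> MX" using m1 unfolding mean_interval_def by simp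
  have ba: "bdd_above ((\<lambda>\<mu>1. G \<mu>1 \<mu>2) ` MX)"
    by (rule bdd_aboveI[of _ "Kc"]) (use Kc m2 in auto)
  have "(SUP P\<in>Ps. - hp P \<mu>1 \<mu>2) \<le> - k"
  proof (rule sup_le)
    fix P assume P: "P \<in> Ps"
    have "(ex P - \<mu>1) * (\<mu>2 - ey P) = - ((ex P - \<mu>1) * (ey P - \<mu>2))" by (simp add: algebra_simps)
    then show "- hp P \<mu>1 \<mu>2 \<le> - k" unfolding hp_cv using c P by fastforce
  qed
  then have "k \<le> G \<mu>1 \<mu>2" unfolding G_def by simp
  also have "\<dots> \<le> (SUP \<mu>1\<in>MX. G \<mu>1 \<mu>2)" by (rule cSUP_upper[OF m1' ba])
  finally show "k \<le> (SUP \<mu>1\<in>MX. G \<mu>1 \<mu>2)" .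
qed


lemma mvar_expand: "mvar P1 P2 t \<beta> \<gamma> = \<beta>\<^sup>2 * mvar P1 P2 t 1 0 + 2 * \<beta> * \<gamma> * mcov P1 P2 t + \<gamma>\<^sup>2 * mvar P1 P2 t 0 1"
  unfolding mvar_def vr_def sec_def lin_def mcov_def cv_def by (simp add: power2_eq_square algebra_simps)

lemma mvar_same: "mvar P P 1 \<beta> \<gamma> = vr P \<beta> \<gamma>" unfolding mvar_def by simp
lemma mcov_same: "mcov P P 1 = cv P" unfolding mcov_def by simp

lemma mvar_nonneg: "P1 \<in> Ps \<Longrightarrow> P2 \<in> Ps \<Longrightarrow> 0 \<le> t \<Longrightarrow> t \<le> 1 \<Longrightarrow> 0 \<le> mvar P1 P2 t \<beta> \<gamma>"
  unfolding mvar_def using vr_nonneg[of P1 \<beta> \<gamma>] vr_nonneg[of P2 \<beta> \<gamma>] by (intro add_nonneg_nonneg mult_nonneg_nonneg) auto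

lemma mvar_ge: "P1 \<in> Ps \<Longrightarrow> P2 \<in> Ps \<Longrightarrow> 0 \<le> t \<Longrightarrow> t \<le> 1 \<Longrightarrow> L \<le> vr P1 \<beta> \<gamma> \<Longrightarrow> L \<le> vr P2 \<beta> \<gamma> \<Longrightarrow> L \<le> mvar P1 P2 t \<beta> \<gamma>"
proof -
  assume a: "0 \<le> t" "t \<le> 1" "L \<le> vr P1 \<beta> \<gamma>" "L \<le> vr P2 \<beta> \<gamma>"
  have "t * L \<le> t * vr P1 \<beta> \<gamma>" using a by (intro mult_left_mono) auto
  moreover have "(1 - t) * L \<le> (1 - t) * vr P2 \<beta> \<gamma>" using a by (intro mult_left_mono) auto
  moreover have "0 \<le> t * (1 - t) * (lin P1 \<beta> \<gamma> - lin P2 \<beta> \<gamma>)\<^sup>2" using a by simp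
  ultimately show ?thesis unfolding mvar_def by (simp add: algebra_simps)
qed

lemma mcov_cs: "P1 \<in> Ps \<Longrightarrow> P2 \<in> Ps \<Longrightarrow> 0 \<le> t \<Longrightarrow> t \<le> 1 \<Longrightarrow> (mcov P1 P2 t)\<^sup>2 \<le> mvar P1 P2 t 1 0 * mvar P1 P2 t 0 1"
proof -
  assume a: "P1 \<in> Ps" "P2 \<in> Ps" "0 \<le> t" "t \<le> 1"
  show ?thesis
  proof (rule quad_cs)
    fix x y :: real
    show "0 \<le> x\<^sup>2 * mvar P1 P2 t 1 0 + 2 * x * y * mcov P1 P2 t + y\<^sup>2 * mvar P1 P2 t 0 1"
      using mvar_nonneg[OF a, of x y] unfolding mvar_expand[of P1 P2 t x y] by (simp add: algebra_simps)
  qed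
qed

lemma hS: "(\<lambda>\<omega>. X \<omega> + Y \<omega>) = (\<lambda>\<omega>. 1 * X \<omega> + 1 * Y \<omega>)" by simp
lemma hH: "(\<lambda>\<omega>. (X \<omega> + Y \<omega>) / 2) = (\<lambda>\<omega>. (1/2) * X \<omega> + (1/2) * Y \<omega>)" by (simp add: fun_eq_iff field_simps)
lemma hD: "(\<lambda>\<omega>. (X \<omega> - Y \<omega>) / 2) = (\<lambda>\<omega>. (1/2) * X \<omega> + (-1/2) * Y \<omega>)" by (simp add: fun_eq_iff field_simps)

lemma main:
  shows "upper_var Ps (\<lambda>\<omega>. X \<omega> + Y \<omega>)
           \<le> upper_var Ps X + upper_var Ps Y + 2 * upper_cov Ps X Y
       \<and> lower_var Ps (\<lambda>\<omega>. X \<omega> + Y \<omega>)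
           \<ge> lower_var Ps X + lower_var Ps Y + 2 * lower_cov Ps X Y
       \<and> lower_var Ps (\<lambda>\<omega>. (X \<omega> + Y \<omega>) / 2) - upper_var Ps (\<lambda>\<omega>. (X \<omega> - Y \<omega>) / 2)
           \<le> lower_cov Ps X Y
       \<and> lower_cov Ps X Y \<le> upper_cov Ps X Y
       \<and> upper_cov Ps X Y
           \<le> upper_var Ps (\<lambda>\<omega>. (X \<omega> + Y \<omega>) / 2) - lower_var Ps (\<lambda>\<omega>. (X \<omega> - Y \<omega>) / 2)
       \<and> \<bar>upper_cov Ps X Y\<bar> \<le> sqrt (upper_var Ps X * upper_var Ps Y)"
proof (intro conjI)
  obtain P0 where P0: "P0 \<in> Ps" using Ps_ne by auto
  have e1: "mvar P1 P2 t 1 1 = mvar P1 P2 t 1 0 + mvar P1 P2 t 0 1 + 2 * mcov P1 P2 t" for P1 P2 t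
    using mvar_expand[of P1 P2 t 1 1] by simp
  have e2: "mcov P1 P2 t = mvar P1 P2 t (1/2) (1/2) - mvar P1 P2 t (1/2) (-1/2)" for P1 P2 t
    using mvar_expand[of P1 P2 t "1/2" "1/2"] mvar_expand[of P1 P2 t "1/2" "-1/2"] by (simp add: power2_eq_square)
  show "upper_var Ps (\<lambda>\<omega>. X \<omega> + Y \<omega>) \<le> upper_var Ps X + upper_var Ps Y + 2 * upper_cov Ps X Y"
  proof (rule UV2[OF hS])
    fix P1 P2 t assume a: "P1 \<in> Ps" "P2 \<in> Ps" "0 \<le> (t::real)" "t \<le> 1"
    show "mvar P1 P2 t 1 1 \<le> upper_var Ps X + upper_var Ps Y + 2 * upper_cov Ps X Y"
      unfolding e1 using UV1[OF hX a] UV1[OF hY a] UC1[OF a] by linarith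
  qed
  show "lower_var Ps (\<lambda>\<omega>. X \<omega> + Y \<omega>) \<ge> lower_var Ps X + lower_var Ps Y + 2 * lower_cov Ps X Y"
  proof (rule LV2[OF hS])
    fix P assume a: "P \<in> Ps"
    show "lower_var Ps X + lower_var Ps Y + 2 * lower_cov Ps X Y \<le> vr P 1 1"
      using e1[of P P 1] LV1[OF hX a] LV1[OF hY a] LC1[OF a] unfolding mvar_same mcov_same by linarith
  qed
  show "lower_var Ps (\<lambda>\<omega>. (X \<omega> + Y \<omega>) / 2) - upper_var Ps (\<lambda>\<omega>. (X \<omega> - Y \<omega>) / 2) \<le> lower_cov Ps X Y"
  proof (rule LC2)
    fix P1 P2 t assume a: "P1 \<in> Ps" "P2 \<in> Ps" "0 \<le> (t::real)" "t \<le> 1"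
    have "lower_var Ps (\<lambda>\<omega>. (X \<omega> + Y \<omega>) / 2) \<le> mvar P1 P2 t (1/2) (1/2)"
      using a LV1[OF hH a(1)] LV1[OF hH a(2)] by (intro mvar_ge) auto
    then show "lower_var Ps (\<lambda>\<omega>. (X \<omega> + Y \<omega>) / 2) - upper_var Ps (\<lambda>\<omega>. (X \<omega> - Y \<omega>) / 2) \<le> mcov P1 P2 t"
      unfolding e2 using UV1[OF hD a] by linarith
  qed
  show "lower_cov Ps X Y \<le> upper_cov Ps X Y"
    using LC1[OF P0] UC1[OF P0 P0, of 1] unfolding mcov_same by simp
  show "upper_cov Ps X Y \<le> upper_var Ps (\<lambda>\<omega>. (X \<omega> + Y \<omega>) / 2) - lower_var Ps (\<lambda>\<omega>. (X \<omega> - Y \<omega>) / 2)"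
  proof (rule UC2)
    fix P1 P2 t assume a: "P1 \<in> Ps" "P2 \<in> Ps" "0 \<le> (t::real)" "t \<le> 1"
    have "lower_var Ps (\<lambda>\<omega>. (X \<omega> - Y \<omega>) / 2) \<le> mvar P1 P2 t (1/2) (-1/2)"
      using a LV1[OF hD a(1)] LV1[OF hD a(2)] by (intro mvar_ge) auto
    then show "mcov P1 P2 t \<le> upper_var Ps (\<lambda>\<omega>. (X \<omega> + Y \<omega>) / 2) - lower_var Ps (\<lambda>\<omega>. (X \<omega> - Y \<omega>) / 2)"
      unfolding e2 using UV1[OF hH a] by linarith
  qed
  have csb: "\<bar>mcov P1 P2 t\<bar> \<le> sqrt (upper_var Ps X * upper_var Ps Y)"
    if a: "P1 \<in> Ps" "P2 \<in> Ps" "0 \<le> (t::real)" "t \<le> 1" for P1 P2 t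
  proof -
    have "\<bar>mcov P1 P2 t\<bar> = sqrt ((mcov P1 P2 t)\<^sup>2)" by simp
    also have "\<dots> \<le> sqrt (mvar P1 P2 t 1 0 * mvar P1 P2 t 0 1)" by (rule real_sqrt_le_mono[OF mcov_cs[OF a]])
    also have "\<dots> \<le> sqrt (upper_var Ps X * upper_var Ps Y)"
      using UV1[OF hX a] UV1[OF hY a] mvar_nonneg[OF a, of 1 0] mvar_nonneg[OF a, of 0 1]
      by (intro real_sqrt_le_mono mult_mono) auto
    finally show ?thesis .
  qed
  have u: "upper_cov Ps X Y \<le> sqrt (upper_var Ps X * upper_var Ps Y)"
  proof (rule UC2)
    fix P1 P2 t assume a: "P1 \<in> Ps" "P2 \<in> Ps" "0 \<le> (t::real)" "t \<le> 1"
    show "mcov P1 P2 t \<le> sqrt (upper_var Ps X * upper_var Ps Y)" using csb[OF a] by linarith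
  qed
  have l: "- sqrt (upper_var Ps X * upper_var Ps Y) \<le> upper_cov Ps X Y"
    using csb[OF P0 P0, of 1] UC1[OF P0 P0, of 1] by linarith
  show "\<bar>upper_cov Ps X Y\<bar> \<le> sqrt (upper_var Ps X * upper_var Ps Y)" using u l by linarith
qed


end

theorem proposition3p8:
  fixes M :: "'a measure" and Ps :: "'a measure set" and X Y :: "'a \<Rightarrow> real"
  assumes Ps_ne: "Ps \<noteq> {}"
    and Ps_prob: "\<And>P. P \<in> Ps \<Longrightarrow> prob_space P \<and> sets P = sets M"
    and X_meas: "X \<in> borel_measurable M"
    and Y_meas: "Y \<in> borel_measurable M"
    and X2_int: "\<And>P. P \<in> Ps \<Longrightarrow> integrable P (\<lambda>\<omega>. (X \<omega>)\<^sup>2)"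
    and Y2_int: "\<And>P. P \<in> Ps \<Longrightarrow> integrable P (\<lambda>\<omega>. (Y \<omega>)\<^sup>2)"
    and X2_bdd: "bdd_above ((\<lambda>P. integral\<^sup>L P (\<lambda>\<omega>. (X \<omega>)\<^sup>2)) ` Ps)"
    and Y2_bdd: "bdd_above ((\<lambda>P. integral\<^sup>L P (\<lambda>\<omega>. (Y \<omega>)\<^sup>2)) ` Ps)"
  shows "upper_var Ps (\<lambda>\<omega>. X \<omega> + Y \<omega>)
           \<le> upper_var Ps X + upper_var Ps Y + 2 * upper_cov Ps X Y
       \<and> lower_var Ps (\<lambda>\<omega>. X \<omega> + Y \<omega>)
           \<ge> lower_var Ps X + lower_var Ps Y + 2 * lower_cov Ps X Y
       \<and> lower_var Ps (\<lambda>\<omega>. (X \<omega> + Y \<omega>) / 2) - upper_var Ps (\<lambda>\<omega>. (X \<omega> - Y \<omega>) / 2)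
           \<le> lower_cov Ps X Y
       \<and> lower_cov Ps X Y \<le> upper_cov Ps X Y
       \<and> upper_cov Ps X Y
           \<le> upper_var Ps (\<lambda>\<omega>. (X \<omega> + Y \<omega>) / 2) - lower_var Ps (\<lambda>\<omega>. (X \<omega> - Y \<omega>) / 2)
       \<and> \<bar>upper_cov Ps X Y\<bar> \<le> sqrt (upper_var Ps X * upper_var Ps Y)"
proof -
  interpret pv M Ps X Y
    using assms by unfold_locales auto
  show ?thesis by (rule main)
qed

end
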